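(* The map $\mathrm{Trns}_\mu$, restricted to $\Lambda_W^\mu\times\mathcal A$, is injective.
   Context: Let $\underline{G}=(\mathrm{Res}_{\mathbb{F}_{p^f}/\mathbb{F}_p}\mathrm{GL}_3)\times\mathbb{F}\cong\mathrm{GL}_3^f$ with diagonal torus $\underline T$, $X^*(\underline T)\cong(\mathbb{Z}^3)^f$, $\eta=((1,0,-1))_i$, $\pi$ the Frobenius shift $(\pi\lambda)_i=\lambda_{i-1}$, $\mu\in X^*(\underline T)$. Let $\Lambda_W\supset\Lambda_R$ be the weight and root lattices of $\mathrm{SL}_3^f$, $\lambda\mapsto\overline\lambda$ restriction $X^*(\underline T)\to\Lambda_W$ with kernel $X^0(\underline T)$, $\mathrm{can}$ the canonical embedding of $\Lambda_R$ in $X^*(\underline T)$ (characters trivial on the center), $\mathrm{sec}:\Lambda_W\to X^*(\underline T)$ a section. Using the $p$-dot action $t_\lambda w\cdot\mu=p\lambda+w(\mu+\eta)-\eta$, let $\underline A$ be the lowest dominant $p$-restricted alcove, $\mathcal A=\{A,B\}^f$ the dominant $p$-restricted alcoves, $\widetilde{\underline W}^{+,\mathrm{der}}_1$ the elements $wt_{-\pi^{-1}\omega}$ of $\Lambda_W\rtimes S_3^f$ taking $\underline A$ into $\mathcal A$. Writing uniquely elements of $\Lambda_W\times\mathcal A$ as $(\omega+\nu,\pi wt_{-\pi^{-1}\omega}\cdot\underline A)$ with $\nu\in\Lambda_R$, define $\mathrm{Trns}_\mu(\omega+\nu,\pi wt_{-\pi^{-1}\omega}\cdot\underline A)=wt_{-\pi^{-1}\mathrm{sec}(\omega)}\cdot(\mu-\eta+\mathrm{can}(\nu)+\mathrm{sec}(\omega))\in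 X^*(\underline T)/(p-\pi)X^0(\underline T)$, and $\Lambda_W^\mu=\{\omega\in\Lambda_W:\omega+\overline{\mu-\eta}\in\underline A\}$. *)

theory Defs
  imports Complex_Main "HOL-Combinatorics.Permutations" "HOL-Computational_Algebra.Primes"
begin

text \<open>The group is GL_3^f.  A character (element of X^*(T) = (Z^3)^f,
  or of X^*(T) tensor R for real points) is a function  x :: nat => nat => 'a  where
  x i j is the j-th coordinate (j < 3) of the i-th embedding (i < f); it vanishes outside
  i < f, j < 3.  Elements of Lambda_W = X^*(T)/X^0(T) are the cosets of X^0(T).\<close>

definition chars :: "nat \<Rightarrow> (nat \<Rightarrow> nat \<Rightarrow> 'a::zero) set" where
  "chars f = {x. \<forall>i j. (f \<le> i \<or> 3 \<le> j) \<longrightarrow> x i j = 0}"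

definition cadd :: "(nat \<Rightarrow> nat \<Rightarrow> 'a::plus) \<Rightarrow> (nat \<Rightarrow> nat \<Rightarrow> 'a) \<Rightarrow> nat \<Rightarrow> nat \<Rightarrow> 'a" where
  "cadd x y = (\<lambda>i j. x i j + y i j)"

definition csub :: "(nat \<Rightarrow> nat \<Rightarrow> 'a::minus) \<Rightarrow> (nat \<Rightarrow> nat \<Rightarrow> 'a) \<Rightarrow> nat \<Rightarrow> nat \<Rightarrow> 'a" where
  "csub x y = (\<lambda>i j. x i j - y i j)"

definition cscale :: "'a::times \<Rightarrow> (nat \<Rightarrow> nat \<Rightarrow> 'a) \<Rightarrow> nat \<Rightarrow> nat \<Rightarrow> 'a" where
  "cscale c x = (\<lambda>i j. c * x i j)"

definition cofint :: "(nat \<Rightarrow> nat \<Rightarrow> int) \<Rightarrow> nat \<Rightarrow> nat \<Rightarrow> 'a::ring_1" where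
  "cofint x = (\<lambda>i j. of_int (x i j))"

definition eta :: "nat \<Rightarrow> nat \<Rightarrow> nat \<Rightarrow> 'a::ring_1" where
  "eta f = (\<lambda>i j. if i < f \<and> j < 3 then 1 - of_nat j else 0)"

text \<open>Frobenius shift (pi x)_i = x_{i-1} (indices mod f) and its inverse.\<close>
definition piS :: "nat \<Rightarrow> (nat \<Rightarrow> 'b) \<Rightarrow> nat \<Rightarrow> 'b" where
  "piS f x = (\<lambda>i. x ((i + f - 1) mod f))"

definition piC :: "nat \<Rightarrow> (nat \<Rightarrow> nat \<Rightarrow> 'a::zero) \<Rightarrow> nat \<Rightarrow> nat \<Rightarrow> 'a" where
  "piC f x = (\<lambda>i j. if i < f then x ((i + f - 1) mod f) j else 0)"

definition piCinv :: "nat \<Rightarrow> (nat \<Rightarrow> nat \<Rightarrow> 'a::zero) \<Rightarrow> nat \<Rightarrow> nat \<Rightarrow> 'a" where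
  "piCinv f x = (\<lambda>i j. if i < f then x ((i + 1) mod f) j else 0)"

text \<open>X^0(T): characters trivial on the derived subgroup (constant in each embedding).\<close>
definition X0 :: "nat \<Rightarrow> (nat \<Rightarrow> nat \<Rightarrow> int) set" where
  "X0 f = {x \<in> chars f. \<forall>i<f. x i 1 = x i 0 \<and> x i 2 = x i 0}"

text \<open>Characters trivial on the center: image of can.\<close>
definition rootchars :: "nat \<Rightarrow> (nat \<Rightarrow> nat \<Rightarrow> int) set" where
  "rootchars f = {x \<in> chars f. \<forall>i<f. x i 0 + x i 1 + x i 2 = 0}"

text \<open>Restriction X^*(T) -> Lambda_W, lambda |-> overline lambda.\<close>
definition bar :: "nat \<Rightarrow> (nat \<Rightarrow> nat \<Rightarrow> int) \<Rightarrow> (nat \<Rightarrow> nat \<Rightarrow> int) set" where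
  "bar f x = {y \<in> chars f. csub y x \<in> X0 f}"

definition LamW :: "nat \<Rightarrow> (nat \<Rightarrow> nat \<Rightarrow> int) set set" where
  "LamW f = bar f ` chars f"

definition LamR :: "nat \<Rightarrow> (nat \<Rightarrow> nat \<Rightarrow> int) set set" where
  "LamR f = bar f ` rootchars f"

definition can :: "nat \<Rightarrow> (nat \<Rightarrow> nat \<Rightarrow> int) set \<Rightarrow> nat \<Rightarrow> nat \<Rightarrow> int" where
  "can f \<nu> = (THE x. x \<in> rootchars f \<and> bar f x = \<nu>)"

definition wadd :: "(nat \<Rightarrow> nat \<Rightarrow> int) set \<Rightarrow> (nat \<Rightarrow> nat \<Rightarrow> int) set \<Rightarrow> (nat \<Rightarrow> nat \<Rightarrow> int) set" where
  "wadd \<omega> \<nu> = {cadd a b | a b. a \<in> \<omega> \<and> b \<in> \<nu>}"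

definition Wgrp :: "nat \<Rightarrow> (nat \<Rightarrow> nat \<Rightarrow> nat) set" where
  "Wgrp f = {w. \<forall>i. w i permutes {0..<3} \<and> (f \<le> i \<longrightarrow> w i = id)}"

definition wact :: "(nat \<Rightarrow> nat \<Rightarrow> nat) \<Rightarrow> (nat \<Rightarrow> nat \<Rightarrow> 'a) \<Rightarrow> nat \<Rightarrow> nat \<Rightarrow> 'a" where
  "wact w x = (\<lambda>i j. x i (inv (w i) j))"

text \<open>p-dot action of w t_lambda (lambda an integral character) on x:
  w t_lambda . x = w(p lambda + x + eta) - eta.\<close>
definition dot :: "nat \<Rightarrow> nat \<Rightarrow> (nat \<Rightarrow> nat \<Rightarrow> nat) \<Rightarrow> (nat \<Rightarrow> nat \<Rightarrow> int)
    \<Rightarrow> (nat \<Rightarrow> nat \<Rightarrow> 'a::ring_1) \<Rightarrow> nat \<Rightarrow> nat \<Rightarrow> 'a" where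
  "dot f p w lam x = csub (wact w (cadd (cadd (cscale (of_nat p) (cofint lam)) x) (eta f))) (eta f)"

text \<open>Dominant p-restricted alcoves of GL_3^f: products of the lower alcove A and the
  upper alcove B (for the p-dot action), the choice in embedding i given by c i
  (True = B, False = A).\<close>
definition alc :: "nat \<Rightarrow> nat \<Rightarrow> (nat \<Rightarrow> bool) \<Rightarrow> (nat \<Rightarrow> nat \<Rightarrow> real) set" where
  "alc f p c = {x \<in> chars f. \<forall>i<f.
     (if c i then cadd x (eta f) i 0 - cadd x (eta f) i 1 < real p
                \<and> cadd x (eta f) i 1 - cadd x (eta f) i 2 < real p
                \<and> real p < cadd x (eta f) i 0 - cadd x (eta f) i 2
      else 0 < cadd x (eta f) i 0 - cadd x (eta f) i 1
                \<and> 0 < cadd x (eta f) i 1 - cadd x (eta f) i 2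
                \<and> cadd x (eta f) i 0 - cadd x (eta f) i 2 < real p)}"

definition lowA :: "nat \<Rightarrow> nat \<Rightarrow> (nat \<Rightarrow> nat \<Rightarrow> real) set" where
  "lowA f p = alc f p (\<lambda>_. False)"

definition Acal :: "nat \<Rightarrow> nat \<Rightarrow> (nat \<Rightarrow> nat \<Rightarrow> real) set set" where
  "Acal f p = {alc f p c | c. True}"

text \<open>Image of a set of real points under w t_{-omega}, omega \<in> Lambda_W (a coset).\<close>
definition alcimg :: "nat \<Rightarrow> nat \<Rightarrow> (nat \<Rightarrow> nat \<Rightarrow> nat) \<Rightarrow> (nat \<Rightarrow> nat \<Rightarrow> int) set
    \<Rightarrow> (nat \<Rightarrow> nat \<Rightarrow> real) set \<Rightarrow> (nat \<Rightarrow> nat \<Rightarrow> real) set" where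
  "alcimg f p w \<omega> S = {dot f p w (cscale (-1) r) x | x r. x \<in> S \<and> r \<in> \<omega>}"

text \<open>W~^{+,der}_1: the pairs (w, omega) such that w t_{-pi^{-1} omega} maps underline A into \<A>.\<close>
definition Wt1 :: "nat \<Rightarrow> nat \<Rightarrow> ((nat \<Rightarrow> nat \<Rightarrow> nat) \<times> (nat \<Rightarrow> nat \<Rightarrow> int) set) set" where
  "Wt1 f p = {(w, \<omega>). w \<in> Wgrp f \<and> \<omega> \<in> LamW f \<and>
      alcimg f p w (piCinv f ` \<omega>) (lowA f p) \<in> Acal f p}"

text \<open>Frobenius on S_3^f; pi(w t_{-pi^{-1} omega}) = (pi w) t_{-omega}.\<close>
definition piW :: "nat \<Rightarrow> (nat \<Rightarrow> nat \<Rightarrow> nat) \<Rightarrow> nat \<Rightarrow> nat \<Rightarrow> nat" where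
  "piW f w = (\<lambda>i. if i < f then w ((i + f - 1) mod f) else id)"

text \<open>The class of x in X^*(T)/(p - pi) X^0(T).\<close>
definition qcls :: "nat \<Rightarrow> nat \<Rightarrow> (nat \<Rightarrow> nat \<Rightarrow> int) \<Rightarrow> (nat \<Rightarrow> nat \<Rightarrow> int) set" where
  "qcls f p x = {y \<in> chars f. \<exists>z \<in> X0 f. csub y x = csub (cscale (int p) z) (piC f z)}"

text \<open>Trns_mu, for a section sec of the restriction map.\<close>
definition Trns :: "nat \<Rightarrow> nat \<Rightarrow> (nat \<Rightarrow> nat \<Rightarrow> int) \<Rightarrow> ((nat \<Rightarrow> nat \<Rightarrow> int) set \<Rightarrow> nat \<Rightarrow> nat \<Rightarrow> int)
    \<Rightarrow> (nat \<Rightarrow> nat \<Rightarrow> int) set \<times> (nat \<Rightarrow> nat \<Rightarrow> real) set \<Rightarrow> (nat \<Rightarrow> nat \<Rightarrow> int) set" where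
  "Trns f p \<mu> sec = (\<lambda>(lam, C). THE v. \<exists>\<omega> \<nu> w.
      (w, \<omega>) \<in> Wt1 f p \<and> \<nu> \<in> LamR f \<and> lam = wadd \<omega> \<nu> \<and>
      C = alcimg f p (piW f w) \<omega> (lowA f p) \<and>
      v = qcls f p (dot f p w (cscale (-1) (piCinv f (sec \<omega>)))
                     (cadd (cadd (csub \<mu> (eta f)) (can f \<nu>)) (sec \<omega>))))"

definition LamWmu :: "nat \<Rightarrow> nat \<Rightarrow> (nat \<Rightarrow> nat \<Rightarrow> int) \<Rightarrow> (nat \<Rightarrow> nat \<Rightarrow> int) set set" where
  "LamWmu f p \<mu> = {\<omega> \<in> LamW f. \<forall>y \<in> wadd \<omega> (bar f (csub \<mu> (eta f))). cofint y \<in> lowA f p}"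

end

theory Submission
  imports Defs
begin

lemma lt3_cases: "(m::nat) < 3 \<Longrightarrow> m = 0 \<or> m = 1 \<or> m = 2" by auto

lemma core:
  fixes t1 t2 :: "nat \<Rightarrow> real" and q :: "nat \<Rightarrow> nat" and k :: "nat \<Rightarrow> int" and p :: real
  assumes p: "p > 0"
    and q: "q 0 < 3" "q 1 < 3" "q 2 < 3" "q 0 \<noteq> q 1" "q 0 \<noteq> q 2" "q 1 \<noteq> q 2"
    and w1: "t1 1 < t1 0" "t1 2 < t1 1" "t1 0 - t1 2 < p"
    and w2: "t2 1 < t2 0" "t2 2 < t2 1" "t2 0 - t2 2 < p"
    and eq: "\<And>m. m < 3 \<Longrightarrow> t1 m - t2 (q m) = p * of_int (k m)"
    and dv: "3 dvd (k 0 + k 1 + k 2)"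
  shows "q 0 = 0 \<and> q 1 = 1 \<and> q 2 = 2 \<and> k 0 = k 1 \<and> k 1 = k 2"
proof -
  have bnd: "\<bar>t2 a - t2 b\<bar> < p" if "a < 3" "b < 3" for a b
    using that w2 by (auto dest!: lt3_cases)
  have d: "\<bar>k a - k b\<bar> \<le> 1" if ab: "a < 3" "b < 3" "\<bar>t1 a - t1 b\<bar> < p" for a b
  proof -
    have "t1 a - t1 b - (t2 (q a) - t2 (q b)) = p * of_int (k a - k b)"
      using eq[OF ab(1)] eq[OF ab(2)] by (simp add: algebra_simps)
    moreover have "\<bar>t2 (q a) - t2 (q b)\<bar> < p"
      using bnd ab q by (auto dest!: lt3_cases)
    ultimately have "\<bar>p * of_int (k a - k b)\<bar> < 2 * p" using ab(3) by linarith
    hence "p * \<bar>of_int (k a - k b)\<bar> < p * 2" using p by (simp add: abs_mult)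
    hence "\<bar>of_int (k a - k b)\<bar> < (2::real)" using p by simp
    hence "\<bar>k a - k b\<bar> < 2" by linarith
    thus ?thesis by simp
  qed
  have "\<bar>k 0 - k 1\<bar> \<le> 1" by (rule d) (use w1 in auto)
  moreover have "\<bar>k 0 - k 2\<bar> \<le> 1" by (rule d) (use w1 in auto)
  moreover have "\<bar>k 1 - k 2\<bar> \<le> 1" by (rule d) (use w1 in auto)
  ultimately have kk: "k 0 = k 1 \<and> k 1 = k 2" using dv by presburger
  have e: "t1 m = t2 (q m) + p * of_int (k 0)" if "m < 3" for m
    using eq[OF that] kk that by (auto dest!: lt3_cases)
  have "t2 (q 1) < t2 (q 0)" "t2 (q 2) < t2 (q 1)" using w1 e[of 0] e[of 1] e[of 2] by auto
  hence "q 0 < q 1" "q 1 < q 2"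
    using q w2 by (auto dest!: lt3_cases)
  hence "q 0 = 0 \<and> q 1 = 1 \<and> q 2 = 2" using q by linarith
  thus ?thesis using kk by simp
qed


lemma mod_pred_succ: "i < (f::nat) \<Longrightarrow> ((i + f - 1) mod f + 1) mod f = i"
proof -
  assume i: "i < f"
  show ?thesis
  proof (cases "i = 0")
    case True
    then show ?thesis using i by (simp add: mod_if)
  next
    case False
    then have "(i + f - 1) mod f = i - 1" using i by (simp add: mod_if)
    then show ?thesis using i False by simp
  qed
qed

lemma mod_succ_pred: "i < (f::nat) \<Longrightarrow> ((i + 1) mod f + f - 1) mod f = i"
proof -
  assume i: "i < f"
  show ?thesis
  proof (cases "i + 1 = f")
    case True
    then show ?thesis using i by simp
  next
    case False
    then have "(i + 1) mod f = i + 1" using i by simp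
    then show ?thesis using i by simp
  qed
qed

lemma charsD: "x \<in> chars f \<Longrightarrow> (f \<le> i \<or> 3 \<le> j) \<Longrightarrow> x i j = 0"
  by (auto simp add: chars_def)

lemma charsI: "(\<And>i j. f \<le> i \<or> 3 \<le> j \<Longrightarrow> x i j = 0) \<Longrightarrow> x \<in> chars f"
  by (auto simp add: chars_def)

lemma csub_chars: "(x::nat\<Rightarrow>nat\<Rightarrow>'a::ab_group_add)  \<in> chars f \<Longrightarrow> y \<in> chars f \<Longrightarrow> csub x y \<in> chars f"
  by (auto simp: chars_def csub_def)

lemma cadd_chars: "(x::nat\<Rightarrow>nat\<Rightarrow>'a::ab_group_add)  \<in> chars f \<Longrightarrow> y \<in> chars f \<Longrightarrow> cadd x y \<in> chars f"
  by (auto simp: chars_def cadd_def)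

lemma eta_chars: "eta f \<in> chars f"
  by (auto simp: chars_def eta_def)

lemma X0_iff: "z \<in> X0 f \<longleftrightarrow> z \<in> chars f \<and> (\<exists>c. \<forall>i<f. \<forall>j<3. z i j = c i)"
proof
  assume "z \<in> X0 f"
  hence z: "z \<in> chars f" "\<forall>i<f. z i 1 = z i 0 \<and> z i 2 = z i 0" by (auto simp: X0_def)
  have "\<forall>i<f. \<forall>j<3. z i j = z i 0"
  proof (intro allI impI)
    fix i j :: nat assume "i < f" "j < 3"
    hence "j = 0 \<or> j = 1 \<or> j = 2" "z i 1 = z i 0" "z i 2 = z i 0" using z(2) lt3_cases by blast+
    thus "z i j = z i 0" by (elim disjE) simp_all
  qed
  hence "\<exists>c. \<forall>i<f. \<forall>j<3. z i j = c i" by (rule exI[of _ "\<lambda>i. z i 0"])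
  thus "z \<in> chars f \<and> (\<exists>c. \<forall>i<f. \<forall>j<3. z i j = c i)" using z(1) by (rule conjI[rotated])
next
  assume "z \<in> chars f \<and> (\<exists>c. \<forall>i<f. \<forall>j<3. z i j = c i)"
  then obtain c where z: "z \<in> chars f" "\<forall>i<f. \<forall>j<3. z i j = c i" by blast
  have "z i 1 = z i 0 \<and> z i 2 = z i 0" if "i < f" for i
  proof -
    have "(0::nat) < 3" "(1::nat) < 3" "(2::nat) < 3" by simp_all
    hence "z i 0 = c i" "z i 1 = c i" "z i 2 = c i" using z(2) that by blast+
    thus ?thesis by simp
  qed
  thus "z \<in> X0 f" using z(1) by (auto simp: X0_def)
qed

lemma csub_X0_iff: "x \<in> chars f \<Longrightarrow> y \<in> chars f \<Longrightarrow>
   csub x y \<in> X0 f \<longleftrightarrow> (\<exists>c. \<forall>i<f. \<forall>j<3. x i j - y i j = c i)"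
  by (simp add: X0_iff csub_chars) (simp add: csub_def)

lemma bar_iff: "y \<in> bar f x \<longleftrightarrow> y \<in> chars f \<and> csub y x \<in> X0 f"
  by (simp add: bar_def)

lemma bar_self: "x \<in> chars f \<Longrightarrow> x \<in> bar f x"
proof -
  assume "x \<in> chars f"
  moreover have "csub x x = (\<lambda>i j. 0)" by (simp add: csub_def)
  ultimately show ?thesis by (simp add: bar_iff X0_def chars_def)
qed

lemma bar_eq_iff: "x \<in> chars f \<Longrightarrow> y \<in> chars f \<Longrightarrow>
    bar f x = bar f y \<longleftrightarrow> (\<exists>c. \<forall>i<f. \<forall>j<3. x i j - y i j = c i)"
proof
  assume x: "x \<in> chars f" and y: "y \<in> chars f" and e: "bar f x = bar f y"
  have "x \<in> bar f y" using bar_self[OF x] e by simp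
  thus "\<exists>c. \<forall>i<f. \<forall>j<3. x i j - y i j = c i"
    using x y by (simp add: bar_iff csub_X0_iff)
next
  assume x: "x \<in> chars f" and y: "y \<in> chars f"
    and h: "\<exists>c. \<forall>i<f. \<forall>j<3. x i j - y i j = c i"
  then obtain c where c: "\<forall>i<f. \<forall>j<3. x i j - y i j = c i" by blast
  show "bar f x = bar f y"
  proof (rule set_eqI)
    fix z
    show "z \<in> bar f x \<longleftrightarrow> z \<in> bar f y"
    proof (cases "z \<in> chars f")
      case True
      have "(\<exists>d. \<forall>i<f. \<forall>j<3. z i j - x i j = d i) \<longleftrightarrow> (\<exists>d. \<forall>i<f. \<forall>j<3. z i j - y i j = d i)"
      proof
        assume "\<exists>d. \<forall>i<f. \<forall>j<3. z i j - x i j = d i"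
        then obtain d where "\<forall>i<f. \<forall>j<3. z i j - x i j = d i" by blast
        hence "\<forall>i<f. \<forall>j<3. z i j - y i j = d i + c i" using c
          by (metis add_diff_cancel_left' add_diff_eq diff_add_cancel)
        thus "\<exists>d. \<forall>i<f. \<forall>j<3. z i j - y i j = d i" by (rule exI[of _ "\<lambda>i. d i + c i"])
      next
        assume "\<exists>d. \<forall>i<f. \<forall>j<3. z i j - y i j = d i"
        then obtain d where "\<forall>i<f. \<forall>j<3. z i j - y i j = d i" by blast
        hence "\<forall>i<f. \<forall>j<3. z i j - x i j = d i - c i" using c
          by (metis diff_diff_eq2 diff_add_cancel add_diff_eq)
        thus "\<exists>d. \<forall>i<f. \<forall>j<3. z i j - x i j = d i" by (rule exI[of _ "\<lambda>i. d i - c i"])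
      qed
      then show ?thesis using x y True by (simp add: bar_iff csub_X0_iff)
    next
      case False
      then show ?thesis by (simp add: bar_iff)
    qed
  qed
qed

lemma mem_bar_eq: "x \<in> chars f \<Longrightarrow> r \<in> bar f x \<Longrightarrow> bar f r = bar f x"
  by (subst bar_eq_iff) (auto simp: bar_iff csub_X0_iff)

lemma LamW_bar: "\<omega> \<in> LamW f \<Longrightarrow> \<exists>L. L \<in> chars f \<and> \<omega> = bar f L"
  by (auto simp: LamW_def)

lemma wadd_bar: "x \<in> chars f \<Longrightarrow> y \<in> chars f \<Longrightarrow> wadd (bar f x) (bar f y) = bar f (cadd x y)"
proof (rule set_eqI)
  fix z assume x: "x \<in> chars f" and y: "y \<in> chars f"
  show "z \<in> wadd (bar f x) (bar f y) \<longleftrightarrow> z \<in> bar f (cadd x y)"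
  proof
    assume "z \<in> wadd (bar f x) (bar f y)"
    then obtain a b where z: "z = cadd a b" and a: "a \<in> bar f x" and b: "b \<in> bar f y"
      by (auto simp: wadd_def)
    have ac: "a \<in> chars f" and bc: "b \<in> chars f" using a b by (auto simp: bar_iff)
    obtain c where c: "\<forall>i<f. \<forall>j<3. a i j - x i j = c i" using a x ac by (auto simp: bar_iff csub_X0_iff)
    obtain d where d: "\<forall>i<f. \<forall>j<3. b i j - y i j = d i" using b y bc by (auto simp: bar_iff csub_X0_iff)
    have "\<forall>i<f. \<forall>j<3. cadd a b i j - cadd x y i j = c i + d i"
      using c d by (simp add: cadd_def algebra_simps)
    hence "\<exists>e. \<forall>i<f. \<forall>j<3. cadd a b i j - cadd x y i j = e i" by (rule exI[of _ "\<lambda>i. c i + d i"])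
    then show "z \<in> bar f (cadd x y)" unfolding z using ac bc x y
      by (simp add: bar_iff csub_X0_iff cadd_chars)
  next
    assume z: "z \<in> bar f (cadd x y)"
    have zc: "z \<in> chars f" using z by (simp add: bar_iff)
    obtain c where c: "\<forall>i<f. \<forall>j<3. z i j - cadd x y i j = c i"
      using z x y zc by (auto simp: bar_iff csub_X0_iff cadd_chars)
    have "\<forall>i<f. \<forall>j<3. csub z y i j - x i j = c i"
      using c by (simp add: cadd_def csub_def algebra_simps)
    hence "\<exists>e. \<forall>i<f. \<forall>j<3. csub z y i j - x i j = e i" by (rule exI[of _ c])
    hence "csub z y \<in> bar f x" using zc x y
      by (simp add: bar_iff csub_X0_iff csub_chars)
    moreover have "z = cadd (csub z y) y" by (simp add: cadd_def csub_def)
    ultimately show "z \<in> wadd (bar f x) (bar f y)" using bar_self[OF y] unfolding wadd_def by blast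
  qed
qed


subsection \<open>Permutations\<close>

lemma perm3_lt: "u permutes {0..<3} \<Longrightarrow> m < 3 \<Longrightarrow> u m < (3::nat)"
  using permutes_in_image[of u "{0..<3}" m] by simp

lemma perm3_inv_lt: "u permutes {0..<3} \<Longrightarrow> m < 3 \<Longrightarrow> inv u m < (3::nat)"
  using perm3_lt[OF permutes_inv] by blast

lemma perm3_fix: "u permutes {0..<3} \<Longrightarrow> 3 \<le> m \<Longrightarrow> u m = (m::nat)"
  using permutes_not_in[of u "{0..<3}" m] by simp

lemma perm3_inv_fix: "u permutes {0..<3} \<Longrightarrow> 3 \<le> m \<Longrightarrow> inv u m = (m::nat)"
  using perm3_fix[OF permutes_inv] by blast

lemma perm3_inv_eq: "u permutes {0..<3} \<Longrightarrow> inv u j = m \<longleftrightarrow> u m = (j::nat)"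
  by (rule permutes_inv_eq)

lemma perm3_inv_inv: "u permutes {0..<3} \<Longrightarrow> inv u (u m) = (m::nat)"
  by (rule permutes_inverses(2))

lemma perm3_inv_inv': "u permutes {0..<3} \<Longrightarrow> u (inv u m) = (m::nat)"
  by (rule permutes_inverses(1))

lemma three_distinct_sum:
  fixes g :: "nat \<Rightarrow> 'a::comm_monoid_add"
  assumes "a < 3" "b < 3" "c < 3" "a \<noteq> b" "a \<noteq> c" "b \<noteq> c"
  shows "g a + g b + g c = g 0 + g 1 + g 2"
  using assms by (auto dest!: lt3_cases simp: ac_simps)

lemma perm3_sum:
  fixes g :: "nat \<Rightarrow> 'a::comm_monoid_add"
  assumes u: "u permutes {0..<3}"
  shows "g (inv u 0) + g (inv u 1) + g (inv u 2) = g 0 + g 1 + g 2"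
proof (rule three_distinct_sum)
  have iu: "inv u permutes {0..<3}" using permutes_inv[OF u] .
  have inj: "inv u x = inv u y \<Longrightarrow> x = y" for x y
    using permutes_inj[OF iu] by (simp add: inj_def)
  show "inv u 0 < 3" "inv u 1 < 3" "inv u 2 < 3" using perm3_inv_lt[OF u] by simp_all
  show "inv u 0 \<noteq> inv u 1" "inv u 0 \<noteq> inv u 2" "inv u 1 \<noteq> inv u 2"
    using inj[of 0 1] inj[of 0 2] inj[of 1 2] by auto
qed

lemma WgrpD: "w \<in> Wgrp f \<Longrightarrow> w i permutes {0..<3}"
  by (simp add: Wgrp_def)

lemma WgrpD2: "w \<in> Wgrp f \<Longrightarrow> f \<le> i \<Longrightarrow> w i = id"
  by (simp add: Wgrp_def)

subsection \<open>Alcove membership in coordinates\<close>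

definition inA :: "real \<Rightarrow> (nat \<Rightarrow> real) \<Rightarrow> bool" where
  "inA P y \<longleftrightarrow> 0 < y 0 - y 1 \<and> 0 < y 1 - y 2 \<and> y 0 - y 2 < P"

definition inB :: "real \<Rightarrow> (nat \<Rightarrow> real) \<Rightarrow> bool" where
  "inB P y \<longleftrightarrow> y 0 - y 1 < P \<and> y 1 - y 2 < P \<and> P < y 0 - y 2"

definition inC :: "real \<Rightarrow> bool \<Rightarrow> (nat \<Rightarrow> real) \<Rightarrow> bool" where
  "inC P b y = (if b then inB P y else inA P y)"

definition goodU :: "real \<Rightarrow> bool \<Rightarrow> (nat \<Rightarrow> nat) \<Rightarrow> (nat \<Rightarrow> int) \<Rightarrow> bool" where
  "goodU P b u \<sigma> \<longleftrightarrow> u permutes {0..<3} \<and>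
     (\<forall>y. inA P y \<longrightarrow> inC P b (\<lambda>j. y (inv u j) - P * of_int (\<sigma> (inv u j)))) \<and>
     (\<forall>z. inC P b z \<longrightarrow> inA P (\<lambda>m. z (u m) + P * of_int (\<sigma> m)))"

lemma alc_iff: "x \<in> alc f p c \<longleftrightarrow> x \<in> chars f \<and>
   (\<forall>i<f. inC (real p) (c i) (\<lambda>j. x i j + eta f i j))"
  by (simp add: alc_def inC_def inA_def inB_def cadd_def)

lemma table: "\<exists>u \<sigma>. goodU P b u \<sigma> \<and> (\<sigma> 0 + \<sigma> 1 + \<sigma> 2) mod 3 = k mod 3"
proof -
  have k3: "k mod 3 = 0 \<or> k mod 3 = 1 \<or> k mod 3 = 2" by presburger
  have t02: "transpose (0::nat) 2 permutes {0..<3}" by (rule permutes_swap_id) auto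
  have t01: "transpose (0::nat) 1 permutes {0..<3}" by (rule permutes_swap_id) auto
  have t12: "transpose (1::nat) 2 permutes {0..<3}" by (rule permutes_swap_id) auto
  show ?thesis
  proof (cases b)
    case False
    note b = this
    show ?thesis using k3
    proof (elim disjE)
      assume k: "k mod 3 = 0"
      have "goodU P b id (\<lambda>m. 0)" unfolding goodU_def inC_def using b by simp
      thus ?thesis using k by fastforce
    next
      assume k: "k mod 3 = 1"
      define u :: "nat \<Rightarrow> nat" where "u = transpose 0 1 \<circ> transpose 0 2"
      have hu: "u permutes {0..<3}" unfolding u_def by (rule permutes_compose[OF t02 t01])
      have uv: "u 0 = 2" "u 1 = 0" "u 2 = 1" by (simp_all add: u_def)
      have iv: "inv u 0 = 1" "inv u 1 = 2" "inv u 2 = 0" using uv by (simp_all add: perm3_inv_eq[OF hu])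
      have "goodU P b u (\<lambda>m. if m = 0 then 1 else 0)"
        unfolding goodU_def inC_def inA_def inB_def using b hu uv iv by auto
      thus ?thesis using k by fastforce
    next
      assume k: "k mod 3 = 2"
      define u :: "nat \<Rightarrow> nat" where "u = transpose 0 2 \<circ> transpose 0 1"
      have hu: "u permutes {0..<3}" unfolding u_def by (rule permutes_compose[OF t01 t02])
      have uv: "u 0 = 1" "u 1 = 2" "u 2 = 0" by (simp_all add: u_def)
      have iv: "inv u 0 = 2" "inv u 1 = 0" "inv u 2 = 1" using uv by (simp_all add: perm3_inv_eq[OF hu])
      have "goodU P b u (\<lambda>m. if m = 2 then 0 else 1)"
        unfolding goodU_def inC_def inA_def inB_def using b hu uv iv by auto
      thus ?thesis using k by fastforce
    qed
  next
    case True
    note b = this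
    show ?thesis using k3
    proof (elim disjE)
      assume k: "k mod 3 = 0"
      define u :: "nat \<Rightarrow> nat" where "u = transpose 0 2"
      have hu: "u permutes {0..<3}" unfolding u_def by (rule t02)
      have uv: "u 0 = 2" "u 1 = 1" "u 2 = 0" by (simp_all add: u_def)
      have iv: "inv u 0 = 2" "inv u 1 = 1" "inv u 2 = 0" using uv by (simp_all add: perm3_inv_eq[OF hu])
      have "goodU P b u (\<lambda>m. if m = 0 then 1 else if m = 2 then -1 else 0)"
        unfolding goodU_def inC_def inA_def inB_def using b hu uv iv by auto
      thus ?thesis using k by fastforce
    next
      assume k: "k mod 3 = 1"
      define u :: "nat \<Rightarrow> nat" where "u = transpose 1 2"
      have hu: "u permutes {0..<3}" unfolding u_def by (rule t12)
      have uv: "u 0 = 0" "u 1 = 2" "u 2 = 1" by (simp_all add: u_def)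
      have iv: "inv u 0 = 0" "inv u 1 = 2" "inv u 2 = 1" using uv by (simp_all add: perm3_inv_eq[OF hu])
      have "goodU P b u (\<lambda>m. if m = 1 then 1 else 0)"
        unfolding goodU_def inC_def inA_def inB_def using b hu uv iv by auto
      thus ?thesis using k by fastforce
    next
      assume k: "k mod 3 = 2"
      define u :: "nat \<Rightarrow> nat" where "u = transpose 0 1"
      have hu: "u permutes {0..<3}" unfolding u_def by (rule t01)
      have uv: "u 0 = 1" "u 1 = 0" "u 2 = 2" by (simp_all add: u_def)
      have iv: "inv u 0 = 1" "inv u 1 = 0" "inv u 2 = 2" using uv by (simp_all add: perm3_inv_eq[OF hu])
      have "goodU P b u (\<lambda>m. if m = 1 then 0 else 1)"
        unfolding goodU_def inC_def inA_def inB_def using b hu uv iv by auto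
      thus ?thesis using k by fastforce
    qed
  qed
qed


lemma dot_apply: "dot f p w lam x i j =
   of_nat p * of_int (lam i (inv (w i) j)) + x i (inv (w i) j) + eta f i (inv (w i) j) - eta f i j"
  by (simp add: dot_def csub_def wact_def cadd_def cscale_def cofint_def)

lemma inC_cong: "y 0 = y' 0 \<Longrightarrow> y 1 = y' 1 \<Longrightarrow> y 2 = y' 2 \<Longrightarrow> inC P b y = inC P b y'"
  by (simp add: inC_def inA_def inB_def)

lemma inA_cong: "y 0 = y' 0 \<Longrightarrow> y 1 = y' 1 \<Longrightarrow> y 2 = y' 2 \<Longrightarrow> inA P y = inA P y'"
  by (simp add: inA_def)

lemma inA_shift: "inA P (\<lambda>m. y m + d) = inA P y"
  by (simp add: inA_def)

lemma eta_apply: "eta f i j = (if i < f \<and> j < 3 then 1 - of_nat j else 0)"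
  by (simp add: eta_def)

lemma alcimg_eq:
  assumes U: "U \<in> Wgrp f" and S: "\<Sigma> \<in> chars f"
    and g: "\<And>i. i < f \<Longrightarrow> goodU (real p) (c i) (U i) (\<Sigma> i)"
  shows "alcimg f p U (bar f \<Sigma>) (lowA f p) = alc f p c"
proof (rule set_eqI)
  fix z :: "nat \<Rightarrow> nat \<Rightarrow> real"
  show "z \<in> alcimg f p U (bar f \<Sigma>) (lowA f p) \<longleftrightarrow> z \<in> alc f p c"
  proof
    assume "z \<in> alcimg f p U (bar f \<Sigma>) (lowA f p)"
    then obtain x r where z: "z = dot f p U (cscale (-1) r) x" and x: "x \<in> lowA f p"
      and r: "r \<in> bar f \<Sigma>" unfolding alcimg_def by blast
    have xc: "x \<in> chars f" and xA: "\<And>i. i < f \<Longrightarrow> inA (real p) (\<lambda>j. x i j + eta f i j)"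
      using x by (auto simp: lowA_def alc_iff inC_def)
    have rc: "r \<in> chars f" using r by (simp add: bar_iff)
    obtain d where d: "\<forall>i<f. \<forall>j<3. r i j - \<Sigma> i j = d i"
      using r rc S by (auto simp: bar_iff csub_X0_iff)
    have zc: "z \<in> chars f"
    proof (rule charsI)
      fix i j :: nat assume h: "f \<le> i \<or> 3 \<le> j"
      show "z i j = 0"
      proof (cases "f \<le> i")
        case True
        then show ?thesis using xc rc unfolding z dot_apply
          by (simp add: WgrpD2[OF U True] charsD eta_apply cscale_def)
      next
        case False
        hence j: "3 \<le> j" using h by simp
        have "inv (U i) j = j" using perm3_inv_fix[OF WgrpD[OF U] j] .
        then show ?thesis using xc rc j unfolding z dot_apply
          by (simp add: charsD eta_apply cscale_def)
      qed
    qed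
    have "inC (real p) (c i) (\<lambda>j. z i j + eta f i j)" if i: "i < f" for i
    proof -
      let ?u = "U i"
      have hu: "?u permutes {0..<3}" using WgrpD[OF U] .
      let ?y = "\<lambda>m. x i m + eta f i m - real p * of_int (d i)"
      have yA: "inA (real p) ?y" using xA[OF i] inA_shift[of "real p" "\<lambda>m. x i m + eta f i m" "- real p * of_int (d i)"]
        by simp
      have "inC (real p) (c i) (\<lambda>j. ?y (inv ?u j) - real p * of_int (\<Sigma> i (inv ?u j)))"
        using g[OF i] yA unfolding goodU_def by blast
      moreover have eqs: "?y (inv ?u j) - real p * of_int (\<Sigma> i (inv ?u j)) = z i j + eta f i j" if j: "j < 3" for j
      proof -
        have m: "inv ?u j < 3" using perm3_inv_lt[OF hu j] .
        have "r i (inv ?u j) = \<Sigma> i (inv ?u j) + d i" using d i m by force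
        thus ?thesis unfolding z dot_apply by (simp add: cscale_def algebra_simps)
      qed
      ultimately show ?thesis
        by (rule inC_cong[THEN iffD1, rotated -1]) (use eqs[of 0] eqs[of 1] eqs[of 2] in simp_all)
    qed
    thus "z \<in> alc f p c" using zc by (simp add: alc_iff)
  next
    assume zA: "z \<in> alc f p c"
    have zc: "z \<in> chars f" and zC: "\<And>i. i < f \<Longrightarrow> inC (real p) (c i) (\<lambda>j. z i j + eta f i j)"
      using zA by (auto simp: alc_iff)
    define x :: "nat \<Rightarrow> nat \<Rightarrow> real" where
      "x = (\<lambda>i m. if i < f \<and> m < 3 then z i (U i m) + eta f i (U i m) + real p * of_int (\<Sigma> i m) - eta f i m else 0)"
    have xc: "x \<in> chars f" by (rule charsI) (auto simp: x_def)
    have xA: "x \<in> lowA f p"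
    proof -
      have "inA (real p) (\<lambda>j. x i j + eta f i j)" if i: "i < f" for i
      proof -
        have "inA (real p) (\<lambda>m. z i (U i m) + eta f i (U i m) + real p * of_int (\<Sigma> i m))"
          using g[OF i] zC[OF i] unfolding goodU_def by blast
        thus ?thesis by (rule inA_cong[THEN iffD1, rotated -1]) (simp_all add: x_def i)
      qed
      thus ?thesis using xc by (simp add: lowA_def alc_iff inC_def)
    qed
    have "dot f p U (cscale (-1) \<Sigma>) x = z"
    proof (intro ext)
      fix i j :: nat
      show "dot f p U (cscale (-1) \<Sigma>) x i j = z i j"
      proof (cases "f \<le> i")
        case True
        then show ?thesis using zc S unfolding dot_apply
          by (simp add: WgrpD2[OF U True] charsD eta_apply cscale_def x_def)
      next
        case False
        hence i: "i < f" by simp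
        have hu: "U i permutes {0..<3}" using WgrpD[OF U] .
        show ?thesis
        proof (cases "j < 3")
          case True
          have m: "inv (U i) j < 3" using perm3_inv_lt[OF hu True] .
          have um: "U i (inv (U i) j) = j" using perm3_inv_inv'[OF hu] .
          show ?thesis unfolding dot_apply using i m um by (simp add: x_def cscale_def)
        next
          case False
          hence j: "3 \<le> j" by simp
          have "inv (U i) j = j" using perm3_inv_fix[OF hu j] .
          then show ?thesis using zc S j unfolding dot_apply
            by (simp add: charsD eta_apply cscale_def x_def)
        qed
      qed
    qed
    thus "z \<in> alcimg f p U (bar f \<Sigma>) (lowA f p)"
      unfolding alcimg_def using xA bar_self[OF S] by force
  qed
qed


lemma goodU_cong:
  assumes "\<And>m. m < 3 \<Longrightarrow> \<sigma> m = \<sigma>' m" and u: "u permutes {0..<3}"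
  shows "goodU P b u \<sigma> = goodU P b u \<sigma>'"
proof -
  have a: "\<sigma> (inv u j) = \<sigma>' (inv u j)" if "j < 3" for j
    using assms(1) perm3_inv_lt[OF u that] by blast
  have "inC P b (\<lambda>j. y (inv u j) - P * of_int (\<sigma> (inv u j))) =
        inC P b (\<lambda>j. y (inv u j) - P * of_int (\<sigma>' (inv u j)))" for y
    by (rule inC_cong) (simp_all add: a)
  moreover have "inA P (\<lambda>m. z (u m) + P * of_int (\<sigma> m)) = inA P (\<lambda>m. z (u m) + P * of_int (\<sigma>' m))" for z
    by (rule inA_cong) (simp_all add: assms(1))
  ultimately show ?thesis unfolding goodU_def by simp
qed

lemma piCinv_apply: "i < f \<Longrightarrow> piCinv f x i j = x ((i + 1) mod f) j"
  by (simp add: piCinv_def)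

lemma piCinv_chars: "x \<in> chars f \<Longrightarrow> piCinv f x \<in> chars f"
  by (rule charsI) (auto simp: piCinv_def charsD)

lemma piC_chars: "x \<in> chars f \<Longrightarrow> piC f x \<in> chars f"
  by (rule charsI) (auto simp: piC_def charsD)

lemma piCinv_piC: "0 < f \<Longrightarrow> x \<in> chars f \<Longrightarrow> piCinv f (piC f x) = x"
proof (intro ext)
  fix i j assume f: "0 < f" and x: "x \<in> chars f"
  show "piCinv f (piC f x) i j = x i j"
  proof (cases "i < f")
    case True
    have "(i + 1) mod f < f" using f by simp
    then show ?thesis using True mod_succ_pred[OF True] by (simp add: piCinv_def piC_def)
  next
    case False
    then show ?thesis using x by (simp add: piCinv_def charsD)
  qed
qed

lemma piCinv_bar:
  assumes f: "0 < f" and L: "L \<in> chars f"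
  shows "piCinv f ` bar f L = bar f (piCinv f L)"
proof (rule set_eqI)
  fix y
  show "y \<in> piCinv f ` bar f L \<longleftrightarrow> y \<in> bar f (piCinv f L)"
  proof
    assume "y \<in> piCinv f ` bar f L"
    then obtain r where y: "y = piCinv f r" and r: "r \<in> bar f L" by blast
    have rc: "r \<in> chars f" using r by (simp add: bar_iff)
    obtain d where d: "\<forall>i<f. \<forall>j<3. r i j - L i j = d i" using r rc L by (auto simp: bar_iff csub_X0_iff)
    have "\<forall>i<f. \<forall>j<3. piCinv f r i j - piCinv f L i j = d ((i + 1) mod f)"
      using d f by (simp add: piCinv_def)
    hence "\<exists>e. \<forall>i<f. \<forall>j<3. piCinv f r i j - piCinv f L i j = e i" by (rule exI[of _ "\<lambda>i. d ((i + 1) mod f)"])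
    thus "y \<in> bar f (piCinv f L)" unfolding y using rc L
      by (simp add: bar_iff csub_X0_iff piCinv_chars)
  next
    assume y: "y \<in> bar f (piCinv f L)"
    have yc: "y \<in> chars f" using y by (simp add: bar_iff)
    obtain d where d: "\<forall>i<f. \<forall>j<3. y i j - piCinv f L i j = d i"
      using y yc L by (auto simp: bar_iff csub_X0_iff piCinv_chars)
    have "\<forall>i<f. \<forall>j<3. piC f y i j - L i j = d ((i + f - 1) mod f)"
    proof (intro allI impI)
      fix i j :: nat assume i: "i < f" and j: "j < 3"
      have i': "(i + f - 1) mod f < f" using f by simp
      have "piCinv f L ((i + f - 1) mod f) j = L i j"
        using i' mod_pred_succ[OF i] by (simp add: piCinv_def)
      thus "piC f y i j - L i j = d ((i + f - 1) mod f)" using d[rule_format, OF i' j] i by (simp add: piC_def)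
    qed
    hence "\<exists>e. \<forall>i<f. \<forall>j<3. piC f y i j - L i j = e i" by (rule exI[of _ "\<lambda>i. d ((i + f - 1) mod f)"])
    hence "piC f y \<in> bar f L" using yc L by (simp add: bar_iff csub_X0_iff piC_chars)
    moreover have "y = piCinv f (piC f y)" using piCinv_piC[OF f yc] by simp
    ultimately show "y \<in> piCinv f ` bar f L" by blast
  qed
qed

lemma piW_apply: "i < f \<Longrightarrow> piW f w i = w ((i + f - 1) mod f)"
  by (simp add: piW_def)

lemma piW_Wgrp: "0 < f \<Longrightarrow> w \<in> Wgrp f \<Longrightarrow> piW f w \<in> Wgrp f"
  by (auto simp: Wgrp_def piW_def)

lemma rootchars_unique:
  assumes a: "a \<in> rootchars f" and b: "b \<in> rootchars f" and e: "bar f a = bar f b"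
  shows "a = b"
proof (intro ext)
  fix i j
  have ac: "a \<in> chars f" and bc: "b \<in> chars f" using a b by (auto simp: rootchars_def)
  obtain c where c: "\<forall>i<f. \<forall>j<3. a i j - b i j = c i" using e ac bc by (auto simp: bar_eq_iff)
  show "a i j = b i j"
  proof (cases "i < f \<and> j < 3")
    case True
    have "a i 0 - b i 0 = c i" "a i 1 - b i 1 = c i" "a i 2 - b i 2 = c i" using c True by auto
    moreover have "a i 0 + a i 1 + a i 2 = 0" "b i 0 + b i 1 + b i 2 = 0"
      using a b True by (auto simp: rootchars_def)
    ultimately have "c i = 0" by linarith
    thus ?thesis using c True by force
  next
    case False
    then show ?thesis using ac bc by (auto simp: charsD)
  qed
qed

lemma can_prop:
  assumes "\<nu> \<in> LamR f"
  shows "can f \<nu> \<in> rootchars f \<and> bar f (can f \<nu>) = \<nu>"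
proof -
  obtain a where a: "a \<in> rootchars f" "\<nu> = bar f a" using assms by (auto simp: LamR_def)
  have "\<exists>!x. x \<in> rootchars f \<and> bar f x = \<nu>"
    using a rootchars_unique by blast
  thus ?thesis unfolding can_def by (rule theI')
qed


lemma exists_witness:
  assumes f: "0 < f" and lam: "lam \<in> LamW f" and C: "C \<in> Acal f p"
  shows "\<exists>\<omega> \<nu> w. (w, \<omega>) \<in> Wt1 f p \<and> \<nu> \<in> LamR f \<and> lam = wadd \<omega> \<nu> \<and>
      C = alcimg f p (piW f w) \<omega> (lowA f p)"
proof -
  obtain L where L: "L \<in> chars f" "lam = bar f L" using LamW_bar[OF lam] by blast
  obtain c where c: "C = alc f p c" using C by (auto simp: Acal_def)
  have "\<forall>i. \<exists>x. goodU (real p) (c i) (fst x) (snd x) \<and>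
      (snd x 0 + snd x 1 + snd x 2) mod 3 = (L i 0 + L i 1 + L i 2) mod 3"
    using table by fastforce
  then obtain X where X: "\<And>i. goodU (real p) (c i) (fst (X i)) (snd (X i)) \<and>
      (snd (X i) 0 + snd (X i) 1 + snd (X i) 2) mod 3 = (L i 0 + L i 1 + L i 2) mod 3"
    by metis
  define U where "U = (\<lambda>i. if i < f then fst (X i) else id)"
  define S where "S = (\<lambda>i j. if i < f \<and> j < 3 then snd (X i) j else 0)"
  have Uperm: "U i permutes {0..<3}" for i
    using X[of i] by (auto simp: U_def goodU_def)
  have UW: "U \<in> Wgrp f" using Uperm by (auto simp: Wgrp_def U_def)
  have Sc: "S \<in> chars f" by (rule charsI) (auto simp: S_def)
  have gU: "goodU (real p) (c i) (U i) (S i)" if i: "i < f" for i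
  proof -
    have "goodU (real p) (c i) (U i) (S i) = goodU (real p) (c i) (U i) (snd (X i))"
      by (rule goodU_cong) (auto simp: S_def i Uperm)
    thus ?thesis using X[of i] i by (simp add: U_def)
  qed
  define w where "w = (\<lambda>i. if i < f then U ((i + 1) mod f) else id)"
  have wW: "w \<in> Wgrp f" using Uperm by (auto simp: Wgrp_def w_def)
  have piWw: "piW f w = U"
  proof (rule ext)
    fix i
    show "piW f w i = U i"
    proof (cases "i < f")
      case True
      have "(i + f - 1) mod f < f" using f by simp
      then show ?thesis using True mod_pred_succ[OF True] by (simp add: piW_def w_def)
    next
      case False
      then show ?thesis by (simp add: piW_def U_def)
    qed
  qed
  define \<omega> where "\<omega> = bar f S"
  have \<omega>W: "\<omega> \<in> LamW f" using Sc by (simp add: \<omega>_def LamW_def)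
  define q where "q = (\<lambda>i. ((L i 0 - S i 0) + (L i 1 - S i 1) + (L i 2 - S i 2)) div 3)"
  define a where "a = (\<lambda>i j. if i < f \<and> j < 3 then L i j - S i j - q i else 0)"
  have arc: "a \<in> rootchars f"
  proof -
    have "a i 0 + a i 1 + a i 2 = 0" if i: "i < f" for i
    proof -
      have "(S i 0 + S i 1 + S i 2) mod 3 = (L i 0 + L i 1 + L i 2) mod 3"
        using X[of i] i by (simp add: S_def)
      hence "3 dvd ((L i 0 - S i 0) + (L i 1 - S i 1) + (L i 2 - S i 2))"
        by presburger
      hence "3 * q i = (L i 0 - S i 0) + (L i 1 - S i 1) + (L i 2 - S i 2)"
        unfolding q_def by (rule dvd_mult_div_cancel)
      thus ?thesis using i by (simp add: a_def)
    qed
    moreover have "a \<in> chars f" by (rule charsI) (auto simp: a_def)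
    ultimately show ?thesis by (simp add: rootchars_def)
  qed
  define \<nu> where "\<nu> = bar f a"
  have \<nu>R: "\<nu> \<in> LamR f" using arc by (simp add: \<nu>_def LamR_def)
  have ac: "a \<in> chars f" using arc by (simp add: rootchars_def)
  have lw: "lam = wadd \<omega> \<nu>"
  proof -
    have "wadd \<omega> \<nu> = bar f (cadd S a)" unfolding \<omega>_def \<nu>_def by (rule wadd_bar[OF Sc ac])
    also have "\<dots> = bar f L"
    proof (subst bar_eq_iff)
      show "cadd S a \<in> chars f" using Sc ac by (rule cadd_chars)
      show "L \<in> chars f" by (rule L(1))
      have "\<forall>i<f. \<forall>j<3. cadd S a i j - L i j = - q i" by (simp add: cadd_def a_def)
      thus "\<exists>c. \<forall>i<f. \<forall>j<3. cadd S a i j - L i j = c i" by (rule exI[of _ "\<lambda>i. - q i"])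
    qed
    finally show ?thesis using L(2) by simp
  qed
  have Wt: "(w, \<omega>) \<in> Wt1 f p"
  proof -
    have "piCinv f ` \<omega> = bar f (piCinv f S)" unfolding \<omega>_def by (rule piCinv_bar[OF f Sc])
    moreover have "alcimg f p w (bar f (piCinv f S)) (lowA f p) = alc f p (\<lambda>i. c ((i + 1) mod f))"
    proof (rule alcimg_eq[OF wW piCinv_chars[OF Sc]])
      fix i assume i: "i < f"
      have i': "(i + 1) mod f < f" using f by simp
      have "piCinv f S i = S ((i + 1) mod f)" using i by (simp add: piCinv_def fun_eq_iff)
      moreover have "w i = U ((i + 1) mod f)" using i by (simp add: w_def)
      ultimately show "goodU (real p) (c ((i + 1) mod f)) (w i) (piCinv f S i)" using gU[OF i'] by simp
    qed
    ultimately have "alcimg f p w (piCinv f ` \<omega>) (lowA f p) \<in> Acal f p" by (auto simp: Acal_def)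
    thus ?thesis using wW \<omega>W by (simp add: Wt1_def)
  qed
  have "C = alcimg f p (piW f w) \<omega> (lowA f p)"
    unfolding c piWw \<omega>_def by (rule alcimg_eq[OF UW Sc gU, symmetric])
  thus ?thesis using Wt \<nu>R lw by blast
qed


lemma emb_core:
  fixes U U' :: "nat \<Rightarrow> nat" and t1 t2 :: "nat \<Rightarrow> real" and s1 s2 :: "nat \<Rightarrow> int" and p :: nat
  assumes U: "U permutes {0..<3}" and U': "U' permutes {0..<3}" and p: "0 < p"
    and A1: "inA (real p) t1" and A2: "inA (real p) t2"
    and eq: "\<And>j. j < 3 \<Longrightarrow> t1 (inv U j) - real p * of_int (s1 (inv U j)) =
                          t2 (inv U' j) - real p * of_int (s2 (inv U' j))"
    and dv: "3 dvd (s1 0 + s1 1 + s1 2 - (s2 0 + s2 1 + s2 2))"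
  shows "U = U' \<and> (\<forall>m<3. s1 m - s2 m = s1 0 - s2 0) \<and>
         (\<forall>m<3. t1 m - t2 m = real p * of_int (s1 0 - s2 0))"
proof -
  define q where "q = (\<lambda>m. inv U' (U m))"
  define k where "k = (\<lambda>m. s1 m - s2 (q m))"
  have qlt: "q m < 3" if "m < 3" for m
    unfolding q_def using perm3_inv_lt[OF U' perm3_lt[OF U that]] .
  have qinj: "q a = q b \<Longrightarrow> a = b" for a b
    unfolding q_def using permutes_inj[OF permutes_inv[OF U']] permutes_inj[OF U]
    by (metis injD)
  have eqm: "t1 m - t2 (q m) = real p * of_int (k m)" if m: "m < 3" for m
  proof -
    have "t1 (inv U (U m)) - real p * of_int (s1 (inv U (U m))) =
          t2 (inv U' (U m)) - real p * of_int (s2 (inv U' (U m)))"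
      using eq[OF perm3_lt[OF U m]] .
    hence "t1 m - real p * of_int (s1 m) = t2 (q m) - real p * of_int (s2 (q m))"
      by (simp add: perm3_inv_inv[OF U] q_def)
    thus ?thesis by (simp add: k_def algebra_simps)
  qed
  have "s2 (q 0) + s2 (q 1) + s2 (q 2) = s2 0 + s2 1 + s2 2"
    by (rule three_distinct_sum) (use qlt qinj[of 0 1] qinj[of 0 2] qinj[of 1 2] in \<open>auto\<close>)
  hence dk: "3 dvd (k 0 + k 1 + k 2)" using dv by (simp add: k_def algebra_simps)
  have "q 0 = 0 \<and> q 1 = 1 \<and> q 2 = 2 \<and> k 0 = k 1 \<and> k 1 = k 2"
  proof (rule core[of "real p" q t1 t2 k])
    show "0 < real p" using p by simp
    show "q 0 < 3" "q 1 < 3" "q 2 < 3" using qlt by simp_all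
    show "q 0 \<noteq> q 1" "q 0 \<noteq> q 2" "q 1 \<noteq> q 2" using qinj[of 0 1] qinj[of 0 2] qinj[of 1 2] by auto
    show "t1 1 < t1 0" "t1 2 < t1 1" "t1 0 - t1 2 < real p" using A1 by (auto simp: inA_def)
    show "t2 1 < t2 0" "t2 2 < t2 1" "t2 0 - t2 2 < real p" using A2 by (auto simp: inA_def)
    show "\<And>m. m < 3 \<Longrightarrow> t1 m - t2 (q m) = real p * real_of_int (k m)" by (rule eqm)
    show "3 dvd (k 0 + k 1 + k 2)" by (rule dk)
  qed
  hence qv: "q 0 = 0" "q 1 = 1" "q 2 = 2" and kv: "k 0 = k 1" "k 1 = k 2" by auto
  have qid: "q m = m" if "m < 3" for m using qv that by (auto dest!: lt3_cases)
  have "U m = U' m" for m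
  proof (cases "m < 3")
    case True
    have "inv U' (U m) = m" using qid[OF True] by (simp add: q_def)
    thus ?thesis by (simp add: perm3_inv_eq[OF U'])
  next
    case False
    then show ?thesis using perm3_fix[OF U] perm3_fix[OF U'] by simp
  qed
  hence UU: "U = U'" by (rule ext)
  have kc: "k m = k 0" if "m < 3" for m using kv that by (auto dest!: lt3_cases)
  have s: "s1 m - s2 m = s1 0 - s2 0" if m: "m < 3" for m
    using kc[OF m] qid[OF m] qv by (simp add: k_def)
  have t: "t1 m - t2 m = real p * of_int (s1 0 - s2 0)" if m: "m < 3" for m
    using eqm[OF m] kc[OF m] qid[OF m] qv by (simp add: k_def)
  show ?thesis using UU s t by blast
qed

lemma piW_inj: "0 < f \<Longrightarrow> w \<in> Wgrp f \<Longrightarrow> w' \<in> Wgrp f \<Longrightarrow> piW f w = piW f w' \<Longrightarrow> w = w'"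
proof (rule ext)
  fix i assume f: "0 < f" and w: "w \<in> Wgrp f" and w': "w' \<in> Wgrp f" and e: "piW f w = piW f w'"
  show "w i = w' i"
  proof (cases "i < f")
    case True
    have i': "(i + 1) mod f < f" using f by simp
    have "piW f w ((i + 1) mod f) = piW f w' ((i + 1) mod f)" using e by simp
    thus ?thesis using i' mod_succ_pred[OF True] by (simp add: piW_def)
  next
    case False
    then show ?thesis using WgrpD2[OF w] WgrpD2[OF w'] by simp
  qed
qed


lemma bar_sum_dvd:
  assumes x: "x \<in> chars f" and y: "y \<in> chars f" and e: "bar f x = bar f y" and i: "i < f"
  shows "3 dvd (x i 0 + x i 1 + x i 2 - (y i 0 + y i 1 + y i 2))"
proof -
  obtain c where c: "\<forall>i<f. \<forall>j<3. x i j - y i j = c i" using e x y by (auto simp: bar_eq_iff)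
  have "x i 0 - y i 0 = c i" "x i 1 - y i 1 = c i" "x i 2 - y i 2 = c i" using c i by auto
  hence "x i 0 + x i 1 + x i 2 - (y i 0 + y i 1 + y i 2) = 3 * c i" by linarith
  thus ?thesis by simp
qed

lemma rootchars_sum: "a \<in> rootchars f \<Longrightarrow> i < f \<Longrightarrow> a i 0 + a i 1 + a i 2 = 0"
  by (simp add: rootchars_def)

lemma lowA_inA: "x \<in> lowA f p \<Longrightarrow> i < f \<Longrightarrow> inA (real p) (\<lambda>j. x i j + eta f i j)"
  by (simp add: lowA_def alc_iff inC_def)

lemma lowA_chars: "x \<in> lowA f p \<Longrightarrow> x \<in> chars f"
  by (simp add: lowA_def alc_iff)

lemma witness_unique:
  assumes f: "0 < f" and p: "0 < p" and mu: "\<mu> \<in> chars f"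
    and lamdom: "lam \<in> LamWmu f p \<mu>"
    and W1: "(w, \<omega>) \<in> Wt1 f p" "\<nu> \<in> LamR f" "lam = wadd \<omega> \<nu>" "C = alcimg f p (piW f w) \<omega> (lowA f p)"
    and W2: "(w', \<omega>') \<in> Wt1 f p" "\<nu>' \<in> LamR f" "lam = wadd \<omega>' \<nu>'" "C = alcimg f p (piW f w') \<omega>' (lowA f p)"
  shows "\<omega> = \<omega>' \<and> \<nu> = \<nu>' \<and> w = w'"
proof -
  have wW: "w \<in> Wgrp f" and \<omega>W: "\<omega> \<in> LamW f" using W1(1) by (auto simp: Wt1_def)
  have wW': "w' \<in> Wgrp f" and \<omega>W': "\<omega>' \<in> LamW f" using W2(1) by (auto simp: Wt1_def)
  obtain L where L: "L \<in> chars f" "\<omega> = bar f L" using LamW_bar[OF \<omega>W] by blast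
  obtain L' where L': "L' \<in> chars f" "\<omega>' = bar f L'" using LamW_bar[OF \<omega>W'] by blast
  define a where "a = can f \<nu>"
  define a' where "a' = can f \<nu>'"
  have a: "a \<in> rootchars f" "bar f a = \<nu>" using can_prop[OF W1(2)] by (auto simp: a_def)
  have a': "a' \<in> rootchars f" "bar f a' = \<nu>'" using can_prop[OF W2(2)] by (auto simp: a'_def)
  have ac: "a \<in> chars f" and ac': "a' \<in> chars f" using a a' by (auto simp: rootchars_def)
  have lam1: "lam = bar f (cadd L a)" using W1(3) L(2) a(2) wadd_bar[OF L(1) ac] by simp
  have lam2: "lam = bar f (cadd L' a')" using W2(3) L'(2) a'(2) wadd_bar[OF L'(1) ac'] by simp
  have La: "cadd L a \<in> chars f" using L(1) ac by (rule cadd_chars)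
  have La': "cadd L' a' \<in> chars f" using L'(1) ac' by (rule cadd_chars)
  have me: "csub \<mu> (eta f) \<in> chars f" using mu eta_chars by (rule csub_chars)
  define y0 where "y0 = cadd (cadd L a) (csub \<mu> (eta f))"
  have "y0 \<in> wadd lam (bar f (csub \<mu> (eta f)))"
    unfolding y0_def wadd_def lam1 using bar_self[OF La] bar_self[OF me] by blast
  hence xA: "cofint y0 \<in> lowA f p" using lamdom by (auto simp: LamWmu_def)
  define x :: "nat \<Rightarrow> nat \<Rightarrow> real" where "x = cofint y0"
  define U where "U = piW f w"
  define U' where "U' = piW f w'"
  have UW: "U \<in> Wgrp f" and UW': "U' \<in> Wgrp f" using piW_Wgrp[OF f] wW wW' by (auto simp: U_def U'_def)
  have "dot f p U (cscale (-1) L) x \<in> C"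
    unfolding W1(4) alcimg_def U_def using xA bar_self[OF L(1)] L(2) x_def by blast
  then obtain x' r' where x': "x' \<in> lowA f p" and r': "r' \<in> \<omega>'"
     and eqP: "dot f p U (cscale (-1) L) x = dot f p U' (cscale (-1) r') x'"
    unfolding W2(4) alcimg_def U'_def by blast
  have r'c: "r' \<in> chars f" using r' L' by (simp add: bar_iff)
  have r'L': "bar f r' = bar f L'" using mem_bar_eq[OF L'(1)] r' L'(2) by simp
  have res: "U i = U' i \<and> (\<forall>m<3. L i m - r' i m = L i 0 - r' i 0)" if i: "i < f" for i
  proof -
    have hU: "U i permutes {0..<3}" and hU': "U' i permutes {0..<3}" using WgrpD UW UW' by auto
    have "U i = U' i \<and> (\<forall>m<3. L i m - r' i m = L i 0 - r' i 0) \<and>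
        (\<forall>m<3. (x i m + eta f i m) - (x' i m + eta f i m) = real p * of_int (L i 0 - r' i 0))"
    proof (rule emb_core[OF hU hU' p lowA_inA[OF xA[folded x_def] i] lowA_inA[OF x' i]])
      fix j :: nat assume j: "j < 3"
      have "dot f p U (cscale (-1) L) x i j = dot f p U' (cscale (-1) r') x' i j" using eqP by simp
      thus "x i (inv (U i) j) + eta f i (inv (U i) j) - real p * of_int (L i (inv (U i) j)) =
            x' i (inv (U' i) j) + eta f i (inv (U' i) j) - real p * of_int (r' i (inv (U' i) j))"
        unfolding dot_apply by (simp add: cscale_def algebra_simps)
    next
      have d1: "3 dvd (cadd L a i 0 + cadd L a i 1 + cadd L a i 2 - (cadd L' a' i 0 + cadd L' a' i 1 + cadd L' a' i 2))"
        using bar_sum_dvd[OF La La' _ i] lam1 lam2 by simp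
      have d2: "3 dvd (r' i 0 + r' i 1 + r' i 2 - (L' i 0 + L' i 1 + L' i 2))"
        using bar_sum_dvd[OF r'c L'(1) r'L' i] .
      have "a i 0 + a i 1 + a i 2 = 0" "a' i 0 + a' i 1 + a' i 2 = 0"
        using rootchars_sum a(1) a'(1) i by auto
      thus "3 dvd (L i 0 + L i 1 + L i 2 - (r' i 0 + r' i 1 + r' i 2))"
        using d1 d2 by (simp add: cadd_def) presburger
    qed
    thus ?thesis by blast
  qed
  have UU: "U = U'"
  proof (rule ext)
    fix i show "U i = U' i"
      using res WgrpD2[OF UW] WgrpD2[OF UW'] by (cases "i < f") auto
  qed
  have ww: "w = w'" using piW_inj[OF f wW wW'] UU by (simp add: U_def U'_def)
  have "bar f L = bar f r'"
    using res by (subst bar_eq_iff[OF L(1) r'c]) (rule exI[of _ "\<lambda>i. L i 0 - r' i 0"], blast)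
  hence oo: "\<omega> = \<omega>'" using L(2) L'(2) r'L' by simp
  have "bar f (cadd L a) = bar f (cadd L a')"
    using lam1 W2(3) oo L(2) a'(2) wadd_bar[OF L(1) ac'] by simp
  then obtain c where c: "\<forall>i<f. \<forall>j<3. cadd L a i j - cadd L a' i j = c i"
    using La cadd_chars[OF L(1) ac'] by (auto simp: bar_eq_iff)
  have "\<forall>i<f. \<forall>j<3. a i j - a' i j = c i" using c by (simp add: cadd_def)
  hence "bar f a = bar f a'" by (subst bar_eq_iff[OF ac ac']) (rule exI[of _ c])
  hence "\<nu> = \<nu>'" using a(2) a'(2) by simp
  thus ?thesis using oo ww by simp
qed


lemma Trns_val:
  assumes f: "0 < f" and p: "0 < p" and mu: "\<mu> \<in> chars f"
    and lamdom: "lam \<in> LamWmu f p \<mu>"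
    and W1: "(w, \<omega>) \<in> Wt1 f p" "\<nu> \<in> LamR f" "lam = wadd \<omega> \<nu>" "C = alcimg f p (piW f w) \<omega> (lowA f p)"
  shows "Trns f p \<mu> sec (lam, C) = qcls f p (dot f p w (cscale (-1) (piCinv f (sec \<omega>)))
                     (cadd (cadd (csub \<mu> (eta f)) (can f \<nu>)) (sec \<omega>)))"
  unfolding Trns_def
proof (simp only: prod.case, rule the_equality)
  show "\<exists>\<omega>' \<nu>' w'. (w', \<omega>') \<in> Wt1 f p \<and> \<nu>' \<in> LamR f \<and> lam = wadd \<omega>' \<nu>' \<and>
      C = alcimg f p (piW f w') \<omega>' (lowA f p) \<and>
      qcls f p (dot f p w (cscale (-1) (piCinv f (sec \<omega>)))
                     (cadd (cadd (csub \<mu> (eta f)) (can f \<nu>)) (sec \<omega>))) =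
      qcls f p (dot f p w' (cscale (-1) (piCinv f (sec \<omega>')))
                     (cadd (cadd (csub \<mu> (eta f)) (can f \<nu>')) (sec \<omega>')))"
    by (rule exI[of _ \<omega>], rule exI[of _ \<nu>], rule exI[of _ w]) (use W1 in simp)
next
  fix v
  assume "\<exists>\<omega>' \<nu>' w'. (w', \<omega>') \<in> Wt1 f p \<and> \<nu>' \<in> LamR f \<and> lam = wadd \<omega>' \<nu>' \<and>
      C = alcimg f p (piW f w') \<omega>' (lowA f p) \<and>
      v = qcls f p (dot f p w' (cscale (-1) (piCinv f (sec \<omega>')))
                     (cadd (cadd (csub \<mu> (eta f)) (can f \<nu>')) (sec \<omega>')))"
  then obtain \<omega>' \<nu>' w' where W2: "(w', \<omega>') \<in> Wt1 f p" "\<nu>' \<in> LamR f" "lam = wadd \<omega>' \<nu>'"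
      "C = alcimg f p (piW f w') \<omega>' (lowA f p)"
    and v: "v = qcls f p (dot f p w' (cscale (-1) (piCinv f (sec \<omega>')))
                     (cadd (cadd (csub \<mu> (eta f)) (can f \<nu>')) (sec \<omega>')))" by blast
  have "\<omega> = \<omega>' \<and> \<nu> = \<nu>' \<and> w = w'" by (rule witness_unique[OF f p mu lamdom W1 W2])
  thus "v = qcls f p (dot f p w (cscale (-1) (piCinv f (sec \<omega>)))
                     (cadd (cadd (csub \<mu> (eta f)) (can f \<nu>)) (sec \<omega>)))" using v by simp
qed

lemma dot_chars:
  assumes w: "w \<in> Wgrp f" and lam: "lam \<in> chars f" and x: "(x :: nat \<Rightarrow> nat \<Rightarrow> 'a::ring_1) \<in> chars f"
  shows "dot f p w lam x \<in> chars f"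
proof (rule charsI)
  fix i j :: nat assume h: "f \<le> i \<or> 3 \<le> j"
  show "dot f p w lam x i j = 0"
  proof (cases "f \<le> i")
    case True
    then show ?thesis using x lam unfolding dot_apply
      by (simp add: WgrpD2[OF w True] charsD eta_apply)
  next
    case False
    hence j: "3 \<le> j" using h by simp
    have "inv (w i) j = j" using perm3_inv_fix[OF WgrpD[OF w] j] .
    then show ?thesis using x lam j unfolding dot_apply
      by (simp add: charsD eta_apply)
  qed
qed

lemma cyc_zero:
  fixes e :: "nat \<Rightarrow> int" and p :: int
  assumes f: "0 < f" and p: "2 \<le> p" and h: "\<And>i. i < f \<Longrightarrow> e i = p * e ((i + 1) mod f)"
  shows "i < f \<Longrightarrow> e i = 0"
proof -
  assume i: "i < f"
  define M where "M = Max ((\<lambda>i. \<bar>e i\<bar>) ` {..<f})"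
  have fin: "finite ((\<lambda>i. \<bar>e i\<bar>) ` {..<f})" by simp
  have ne: "(\<lambda>i. \<bar>e i\<bar>) ` {..<f} \<noteq> {}" using f by auto
  obtain k where k: "k < f" "\<bar>e k\<bar> = M" using Max_in[OF fin ne] unfolding M_def by auto
  have le: "\<bar>e j\<bar> \<le> M" if "j < f" for j unfolding M_def using fin that by auto
  define j where "j = (k + f - 1) mod f"
  have j: "j < f" using f by (simp add: j_def)
  have "(j + 1) mod f = k" unfolding j_def by (rule mod_pred_succ[OF k(1)])
  hence "e j = p * e k" using h[OF j] by simp
  hence "\<bar>e j\<bar> = p * \<bar>e k\<bar>" using p by (simp add: abs_mult)
  hence "p * M \<le> M" using le[OF j] k(2) by simp
  moreover have M0: "0 \<le> M" using k(2) by auto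
  moreover have "2 * M \<le> p * M" using p M0 by (rule mult_right_mono)
  ultimately have "M = 0" by linarith
  thus "e i = 0" using le[OF i] by simp
qed


lemma eta_int_real: "real_of_int (eta f i j) = (eta f i j :: real)"
  by (simp add: eta_apply)

lemma mainpart:
  fixes f p :: nat and \<mu> :: "nat \<Rightarrow> nat \<Rightarrow> int"
    and sec :: "(nat \<Rightarrow> nat \<Rightarrow> int) set \<Rightarrow> nat \<Rightarrow> nat \<Rightarrow> int"
  assumes p2: "2 \<le> p" and f: "0 < f" and mu: "\<mu> \<in> chars f"
    and secp: "\<forall>\<omega> \<in> LamW f. sec \<omega> \<in> chars f \<and> bar f (sec \<omega>) = \<omega>"
    and lam1: "lam1 \<in> LamWmu f p \<mu>" and lam2: "lam2 \<in> LamWmu f p \<mu>"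
    and W1: "(w1, \<omega>1) \<in> Wt1 f p" "\<nu>1 \<in> LamR f" "lam1 = wadd \<omega>1 \<nu>1"
    and W2: "(w2, \<omega>2) \<in> Wt1 f p" "\<nu>2 \<in> LamR f" "lam2 = wadd \<omega>2 \<nu>2"
    and eqq: "qcls f p (dot f p w1 (cscale (-1) (piCinv f (sec \<omega>1)))
                     (cadd (cadd (csub \<mu> (eta f)) (can f \<nu>1)) (sec \<omega>1))) =
              qcls f p (dot f p w2 (cscale (-1) (piCinv f (sec \<omega>2)))
                     (cadd (cadd (csub \<mu> (eta f)) (can f \<nu>2)) (sec \<omega>2)))"
  shows "lam1 = lam2 \<and> \<omega>1 = \<omega>2 \<and> w1 = w2"
proof -
  have p: "0 < p" using p2 by simp
  have w1W: "w1 \<in> Wgrp f" and o1: "\<omega>1 \<in> LamW f" using W1(1) by (auto simp: Wt1_def)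
  have w2W: "w2 \<in> Wgrp f" and o2: "\<omega>2 \<in> LamW f" using W2(1) by (auto simp: Wt1_def)
  define s1 where "s1 = sec \<omega>1"
  define s2 where "s2 = sec \<omega>2"
  have s1: "s1 \<in> chars f" "bar f s1 = \<omega>1" using secp o1 by (auto simp: s1_def)
  have s2: "s2 \<in> chars f" "bar f s2 = \<omega>2" using secp o2 by (auto simp: s2_def)
  define a1 where "a1 = can f \<nu>1"
  define a2 where "a2 = can f \<nu>2"
  have a1: "a1 \<in> rootchars f" "bar f a1 = \<nu>1" using can_prop[OF W1(2)] by (auto simp: a1_def)
  have a2: "a2 \<in> rootchars f" "bar f a2 = \<nu>2" using can_prop[OF W2(2)] by (auto simp: a2_def)
  have a1c: "a1 \<in> chars f" and a2c: "a2 \<in> chars f" using a1 a2 by (auto simp: rootchars_def)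
  have l1: "lam1 = bar f (cadd s1 a1)" using W1(3) s1(2) a1(2) wadd_bar[OF s1(1) a1c] by simp
  have l2: "lam2 = bar f (cadd s2 a2)" using W2(3) s2(2) a2(2) wadd_bar[OF s2(1) a2c] by simp
  have me: "csub \<mu> (eta f) \<in> chars f" using mu eta_chars by (rule csub_chars)
  define X1 where "X1 = cadd (cadd (csub \<mu> (eta f)) a1) s1"
  define X2 where "X2 = cadd (cadd (csub \<mu> (eta f)) a2) s2"
  have X1c: "X1 \<in> chars f" unfolding X1_def by (intro cadd_chars me a1c s1(1))
  have X2c: "X2 \<in> chars f" unfolding X2_def by (intro cadd_chars me a2c s2(1))
  define x1 where "x1 = dot f p w1 (cscale (-1) (piCinv f s1)) X1"
  define x2 where "x2 = dot f p w2 (cscale (-1) (piCinv f s2)) X2"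
  have cs1: "cscale (-1) (piCinv f s1) \<in> chars f"
    using piCinv_chars[OF s1(1)] by (auto simp: chars_def cscale_def)
  have cs2: "cscale (-1) (piCinv f s2) \<in> chars f"
    using piCinv_chars[OF s2(1)] by (auto simp: chars_def cscale_def)
  have x1c: "x1 \<in> chars f" unfolding x1_def by (rule dot_chars[OF w1W cs1 X1c])
  have eqq': "qcls f p x1 = qcls f p x2" using eqq by (simp add: x1_def x2_def X1_def X2_def s1_def s2_def a1_def a2_def)
  have "x1 \<in> qcls f p x1"
  proof -
    have "(\<lambda>i j. 0::int) \<in> X0 f" by (simp add: X0_def chars_def)
    moreover have "csub x1 x1 = csub (cscale (int p) (\<lambda>i j. 0)) (piC f (\<lambda>i j. 0))"
      by (simp add: csub_def cscale_def piC_def fun_eq_iff)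
    ultimately show ?thesis using x1c unfolding qcls_def by blast
  qed
  hence "x1 \<in> qcls f p x2" using eqq' by simp
  then obtain z where z: "z \<in> X0 f" and zeq: "csub x1 x2 = csub (cscale (int p) z) (piC f z)"
    unfolding qcls_def by blast
  obtain cz where cz: "\<forall>i<f. \<forall>j<3. z i j = cz i" using z by (auto simp: X0_iff)
  define pr where "pr = (\<lambda>i. (i + f - 1) mod f)"
  define nx where "nx = (\<lambda>i. (i + 1) mod f)"
  have prlt: "pr i < f" for i using f by (simp add: pr_def)
  have nxlt: "nx i < f" for i using f by (simp add: nx_def)
  have keq: "x1 i j - x2 i j = int p * cz i - cz (pr i)" if i: "i < f" and j: "j < 3" for i j
  proof -
    have "x1 i j - x2 i j = int p * z i j - z (pr i) j"
      using fun_cong[OF fun_cong[OF zeq, of i], of j] i by (simp add: csub_def cscale_def piC_def pr_def)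
    thus ?thesis using cz i j prlt by simp
  qed
  define T1 where "T1 = (\<lambda>i m. \<mu> i m + a1 i m + s1 i m)"
  define T2 where "T2 = (\<lambda>i m. \<mu> i m + a2 i m + s2 i m)"
  have x1e: "x1 i j = T1 i (inv (w1 i) j) - int p * s1 (nx i) (inv (w1 i) j) - eta f i j" if i: "i < f" for i j
    unfolding x1_def dot_apply using i by (simp add: cscale_def piCinv_def nx_def X1_def T1_def cadd_def csub_def)
  have x2e: "x2 i j = T2 i (inv (w2 i) j) - int p * s2 (nx i) (inv (w2 i) j) - eta f i j" if i: "i < f" for i j
    unfolding x2_def dot_apply using i by (simp add: cscale_def piCinv_def nx_def X2_def T2_def cadd_def csub_def)
  define d1 where "d1 = (\<lambda>i. s1 i 0 + s1 i 1 + s1 i 2)"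
  define d2 where "d2 = (\<lambda>i. s2 i 0 + s2 i 1 + s2 i 2)"
  have sumx: "x1 i 0 + x1 i 1 + x1 i 2 - (x2 i 0 + x2 i 1 + x2 i 2) = (d1 i - d2 i) - int p * (d1 (nx i) - d2 (nx i))"
    if i: "i < f" for i
  proof -
    have hu1: "w1 i permutes {0..<3}" and hu2: "w2 i permutes {0..<3}" using WgrpD w1W w2W by auto
    have "x1 i 0 + x1 i 1 + x1 i 2 = (\<lambda>m. T1 i m - int p * s1 (nx i) m) 0 + (\<lambda>m. T1 i m - int p * s1 (nx i) m) 1
        + (\<lambda>m. T1 i m - int p * s1 (nx i) m) 2 - (eta f i 0 + eta f i 1 + eta f i 2)"
      using perm3_sum[OF hu1, of "\<lambda>m. T1 i m - int p * s1 (nx i) m"] x1e[OF i] by simp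
    moreover have "x2 i 0 + x2 i 1 + x2 i 2 = (\<lambda>m. T2 i m - int p * s2 (nx i) m) 0 + (\<lambda>m. T2 i m - int p * s2 (nx i) m) 1
        + (\<lambda>m. T2 i m - int p * s2 (nx i) m) 2 - (eta f i 0 + eta f i 1 + eta f i 2)"
      using perm3_sum[OF hu2, of "\<lambda>m. T2 i m - int p * s2 (nx i) m"] x2e[OF i] by simp
    moreover have "a1 i 0 + a1 i 1 + a1 i 2 = 0" "a2 i 0 + a2 i 1 + a2 i 2 = 0"
      using rootchars_sum a1(1) a2(1) i by auto
    ultimately show ?thesis by (simp add: T1_def T2_def d1_def d2_def algebra_simps)
  qed
  define e where "e = (\<lambda>i. d1 i - d2 i + 3 * cz (pr i))"
  have erec: "e i = int p * e (nx i)" if i: "i < f" for i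
  proof -
    define K where "K = int p * cz i - cz (pr i)"
    define D where "D = (d1 i - d2 i) - int p * (d1 (nx i) - d2 (nx i))"
    have "x1 i 0 - x2 i 0 = K" "x1 i 1 - x2 i 1 = K"
         "x1 i 2 - x2 i 2 = K" using keq i by (auto simp: K_def)
    hence "D = 3 * K"
      using sumx[OF i] unfolding D_def[symmetric] by linarith
    hence "(d1 i - d2 i) - int p * (d1 (nx i) - d2 (nx i)) = 3 * (int p * cz i - cz (pr i))"
      unfolding D_def K_def .
    moreover have "pr (nx i) = i" unfolding pr_def nx_def by (rule mod_succ_pred[OF i])
    ultimately show ?thesis by (simp add: e_def algebra_simps)
  qed
  have e0: "e i = 0" if "i < f" for i
  proof (rule cyc_zero[of f "int p" e])
    show "0 < f" by (rule f)
    show "2 \<le> int p" using p2 by simp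
    show "\<And>i. i < f \<Longrightarrow> e i = int p * e ((i + 1) mod f)" by (rule erec[unfolded nx_def])
    show "i < f" by (rule that)
  qed
  have emb: "w1 i = w2 i \<and> (\<forall>m<3. s1 (nx i) m - s2 (nx i) m = s1 (nx i) 0 - s2 (nx i) 0)
      \<and> (\<forall>m<3. T1 i m - T2 i m = T1 i 0 - T2 i 0)" if i: "i < f" for i
  proof -
    have hu1: "w1 i permutes {0..<3}" and hu2: "w2 i permutes {0..<3}" using WgrpD w1W w2W by auto
    have lw1: "cofint X1 \<in> lowA f p"
    proof -
      have "X1 = cadd (cadd s1 a1) (csub \<mu> (eta f))" by (simp add: X1_def cadd_def fun_eq_iff algebra_simps)
      hence "X1 \<in> wadd lam1 (bar f (csub \<mu> (eta f)))"
        unfolding wadd_def l1 using bar_self[OF cadd_chars[OF s1(1) a1c]] bar_self[OF me] by blast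
      thus ?thesis using lam1 by (auto simp: LamWmu_def)
    qed
    have lw2: "cofint X2 \<in> lowA f p"
    proof -
      have "X2 = cadd (cadd s2 a2) (csub \<mu> (eta f))" by (simp add: X2_def cadd_def fun_eq_iff algebra_simps)
      hence "X2 \<in> wadd lam2 (bar f (csub \<mu> (eta f)))"
        unfolding wadd_def l2 using bar_self[OF cadd_chars[OF s2(1) a2c]] bar_self[OF me] by blast
      thus ?thesis using lam2 by (auto simp: LamWmu_def)
    qed
    have XT1: "cofint X1 i m + eta f i m = real_of_int (T1 i m)" for m
      by (simp add: X1_def T1_def cofint_def cadd_def csub_def eta_int_real[symmetric])
    have XT2: "cofint X2 i m + eta f i m = real_of_int (T2 i m)" for m
      by (simp add: X2_def T2_def cofint_def cadd_def csub_def eta_int_real[symmetric])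
    have A1: "inA (real p) (\<lambda>m. real_of_int (T1 i m))" using lowA_inA[OF lw1 i] XT1 by simp
    have A2: "inA (real p) (\<lambda>m. real_of_int (T2 i m - cz (pr i)))"
      using lowA_inA[OF lw2 i] XT2 inA_shift[of "real p" "\<lambda>m. real_of_int (T2 i m)" "- real_of_int (cz (pr i))"]
      by simp
    have "w1 i = w2 i \<and> (\<forall>m<3. s1 (nx i) m - (s2 (nx i) m - cz i) = s1 (nx i) 0 - (s2 (nx i) 0 - cz i)) \<and>
      (\<forall>m<3. real_of_int (T1 i m) - real_of_int (T2 i m - cz (pr i)) =
             real p * of_int (s1 (nx i) 0 - (s2 (nx i) 0 - cz i)))"
    proof (rule emb_core[OF hu1 hu2 p A1 A2])
      fix j :: nat assume j: "j < 3"
      have "x1 i j - x2 i j = int p * cz i - cz (pr i)" by (rule keq[OF i j])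
      hence "T1 i (inv (w1 i) j) - int p * s1 (nx i) (inv (w1 i) j) =
             (T2 i (inv (w2 i) j) - cz (pr i)) - int p * (s2 (nx i) (inv (w2 i) j) - cz i)"
        using x1e[OF i, of j] x2e[OF i, of j] by (simp add: algebra_simps)
      hence "real_of_int (T1 i (inv (w1 i) j) - int p * s1 (nx i) (inv (w1 i) j)) =
             real_of_int ((T2 i (inv (w2 i) j) - cz (pr i)) - int p * (s2 (nx i) (inv (w2 i) j) - cz i))"
        by simp
      thus "real_of_int (T1 i (inv (w1 i) j)) - real p * real_of_int (s1 (nx i) (inv (w1 i) j)) =
            real_of_int (T2 i (inv (w2 i) j) - cz (pr i)) - real p * real_of_int (s2 (nx i) (inv (w2 i) j) - cz i)"
        by simp
    next
      have "pr (nx i) = i" unfolding pr_def nx_def by (rule mod_succ_pred[OF i])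
      hence "e (nx i) = d1 (nx i) - d2 (nx i) + 3 * cz i" by (simp add: e_def)
      hence "d1 (nx i) - d2 (nx i) + 3 * cz i = 0" using e0[OF nxlt] by simp
      thus "3 dvd (s1 (nx i) 0 + s1 (nx i) 1 + s1 (nx i) 2 -
            ((s2 (nx i) 0 - cz i) + (s2 (nx i) 1 - cz i) + (s2 (nx i) 2 - cz i)))"
        by (simp add: d1_def d2_def algebra_simps)
    qed
    hence r1: "w1 i = w2 i"
      and r2': "\<forall>m<3. s1 (nx i) m - (s2 (nx i) m - cz i) = s1 (nx i) 0 - (s2 (nx i) 0 - cz i)"
      and r3: "\<forall>m<3. real_of_int (T1 i m) - real_of_int (T2 i m - cz (pr i)) =
             real p * of_int (s1 (nx i) 0 - (s2 (nx i) 0 - cz i))" by blast+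
    have r2: "\<forall>m<3. s1 (nx i) m - s2 (nx i) m = s1 (nx i) 0 - s2 (nx i) 0"
    proof (intro allI impI)
      fix m :: nat assume m: "m < 3"
      from r2'[rule_format, OF m] show "s1 (nx i) m - s2 (nx i) m = s1 (nx i) 0 - s2 (nx i) 0" by linarith
    qed
    have "\<forall>m<3. T1 i m - T2 i m = T1 i 0 - T2 i 0"
    proof (intro allI impI)
      fix m :: nat assume m: "m < 3"
      have "real_of_int (T1 i m) - real_of_int (T2 i m - cz (pr i)) =
            real_of_int (T1 i 0) - real_of_int (T2 i 0 - cz (pr i))"
        using r3[rule_format, OF m] r3[rule_format, of 0] by simp
      hence "real_of_int (T1 i m - T2 i m) = real_of_int (T1 i 0 - T2 i 0)" by simp
      thus "T1 i m - T2 i m = T1 i 0 - T2 i 0" by (simp only: of_int_eq_iff)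
    qed
    thus ?thesis using r1 r2 by blast
  qed
  have ww: "w1 = w2"
  proof (rule ext)
    fix i show "w1 i = w2 i"
    proof (cases "i < f")
      case True
      show ?thesis by (rule conjunct1[OF emb[OF True]])
    next
      case False
      then show ?thesis using WgrpD2[OF w1W] WgrpD2[OF w2W] by simp
    qed
  qed
  have "\<forall>i<f. \<forall>m<3. s1 i m - s2 i m = s1 i 0 - s2 i 0"
  proof (intro allI impI)
    fix i m :: nat assume i: "i < f" and m: "m < 3"
    have "nx (pr i) = i" unfolding pr_def nx_def by (rule mod_pred_succ[OF i])
    have "\<forall>m<3. s1 (nx (pr i)) m - s2 (nx (pr i)) m = s1 (nx (pr i)) 0 - s2 (nx (pr i)) 0"
      by (rule conjunct1[OF conjunct2[OF emb[OF prlt[of i]]]])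
    hence "s1 (nx (pr i)) m - s2 (nx (pr i)) m = s1 (nx (pr i)) 0 - s2 (nx (pr i)) 0" using m by blast
    thus "s1 i m - s2 i m = s1 i 0 - s2 i 0" unfolding \<open>nx (pr i) = i\<close> .
  qed
  hence "bar f s1 = bar f s2"
    by (subst bar_eq_iff[OF s1(1) s2(1)]) (rule exI[of _ "\<lambda>i. s1 i 0 - s2 i 0"])
  hence oo: "\<omega>1 = \<omega>2" using s1(2) s2(2) by simp
  have "\<forall>i<f. \<forall>m<3. cadd s1 a1 i m - cadd s2 a2 i m = T1 i 0 - T2 i 0"
  proof (intro allI impI)
    fix i m :: nat assume i: "i < f" and m: "m < 3"
    have "\<forall>m<3. T1 i m - T2 i m = T1 i 0 - T2 i 0" by (rule conjunct2[OF conjunct2[OF emb[OF i]]])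
    hence "T1 i m - T2 i m = T1 i 0 - T2 i 0" using m by blast
    thus "cadd s1 a1 i m - cadd s2 a2 i m = T1 i 0 - T2 i 0" by (simp add: T1_def T2_def cadd_def)
  qed
  hence "bar f (cadd s1 a1) = bar f (cadd s2 a2)"
    by (subst bar_eq_iff[OF cadd_chars[OF s1(1) a1c] cadd_chars[OF s2(1) a2c]]) (rule exI[of _ "\<lambda>i. T1 i 0 - T2 i 0"])
  hence "lam1 = lam2" using l1 l2 by simp
  thus ?thesis using oo ww by simp
qed


theorem proposition2p5:
  fixes f p :: nat and \<mu> :: "nat \<Rightarrow> nat \<Rightarrow> int"
    and sec :: "(nat \<Rightarrow> nat \<Rightarrow> int) set \<Rightarrow> nat \<Rightarrow> nat \<Rightarrow> int"
  assumes "prime p" and "1 \<le> f" and "\<mu> \<in> chars f"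
    and "\<forall>\<omega> \<in> LamW f. sec \<omega> \<in> chars f \<and> bar f (sec \<omega>) = \<omega>"
  shows "inj_on (Trns f p \<mu> sec) (LamWmu f p \<mu> \<times> Acal f p)"
proof (rule inj_onI)
  fix A B
  assume A: "A \<in> LamWmu f p \<mu> \<times> Acal f p" and B: "B \<in> LamWmu f p \<mu> \<times> Acal f p"
    and e: "Trns f p \<mu> sec A = Trns f p \<mu> sec B"
  obtain lam1 C1 where AA: "A = (lam1, C1)" by (cases A)
  obtain lam2 C2 where BB: "B = (lam2, C2)" by (cases B)
  have l1: "lam1 \<in> LamWmu f p \<mu>" and c1: "C1 \<in> Acal f p" using A AA by auto
  have l2: "lam2 \<in> LamWmu f p \<mu>" and c2: "C2 \<in> Acal f p" using B BB by auto
  have f0: "0 < f" using assms(2) by simp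
  have p2: "2 \<le> p" using prime_ge_2_nat[OF assms(1)] .
  have p0: "0 < p" using p2 by simp
  have l1W: "lam1 \<in> LamW f" using l1 by (simp add: LamWmu_def)
  have l2W: "lam2 \<in> LamW f" using l2 by (simp add: LamWmu_def)
  obtain \<omega>1 \<nu>1 w1 where W1: "(w1, \<omega>1) \<in> Wt1 f p" "\<nu>1 \<in> LamR f" "lam1 = wadd \<omega>1 \<nu>1"
      "C1 = alcimg f p (piW f w1) \<omega>1 (lowA f p)"
    using exists_witness[OF f0 l1W c1] by blast
  obtain \<omega>2 \<nu>2 w2 where W2: "(w2, \<omega>2) \<in> Wt1 f p" "\<nu>2 \<in> LamR f" "lam2 = wadd \<omega>2 \<nu>2"
      "C2 = alcimg f p (piW f w2) \<omega>2 (lowA f p)"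
    using exists_witness[OF f0 l2W c2] by blast
  have "Trns f p \<mu> sec (lam1, C1) = Trns f p \<mu> sec (lam2, C2)" using e AA BB by simp
  hence eqq: "qcls f p (dot f p w1 (cscale (-1) (piCinv f (sec \<omega>1)))
                     (cadd (cadd (csub \<mu> (eta f)) (can f \<nu>1)) (sec \<omega>1))) =
              qcls f p (dot f p w2 (cscale (-1) (piCinv f (sec \<omega>2)))
                     (cadd (cadd (csub \<mu> (eta f)) (can f \<nu>2)) (sec \<omega>2)))"
    using Trns_val[OF f0 p0 assms(3) l1 W1] Trns_val[OF f0 p0 assms(3) l2 W2] by simp
  have "lam1 = lam2 \<and> \<omega>1 = \<omega>2 \<and> w1 = w2"
    by (rule mainpart[OF p2 f0 assms(3) assms(4) l1 l2 W1(1-3) W2(1-3) eqq])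
  thus "A = B" using AA BB W1(4) W2(4) by simp
qed

end
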